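(* For every word $\omega\in[n]^*$, the set $B_\omega\subseteq\mathbb{Z}^n$ is connected, where a subset of $\mathbb{Z}^n$ is regarded as a graph by joining two of its elements by an edge iff their Euclidean distance is $1$.
   Context: Let $[n]=\{1,\dots,n\}$, $e_1,\dots,e_n$ the standard basis of $\mathbb{Z}^n$; $\varepsilon$ is the empty word, $*$ concatenation. For words $\omega$ over $[n]$ define recursively $\delta^i_\omega\in\mathbb{Z}^n$: $\delta^i_\varepsilon=e_i$; $\delta^j_{\omega*j}=\delta^j_\omega$, $\delta^i_{\omega*j}=\delta^i_\omega-\delta^j_\omega$ for $i\ne j$. Let $B_\varepsilon=\{0\}$ and $B_{\omega*j}=B_\omega+\{0,\delta^j_\omega\}$ (Minkowski sum). *)

theory Defs
  imports Complex_Main "HOL-Library.Function_Algebras"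
begin

(* Index set [n] is modelled by a finite type 'n; Z^n is 'n => int;
   words over [n] are lists of type 'n list (appending a letter = xs @ [j]). *)

definition unitvec :: "'n \<Rightarrow> ('n \<Rightarrow> int)" where
  "unitvec i = (\<lambda>k. if k = i then 1 else 0)"

(* delta on the reversed word: deltaR (j # w) corresponds to delta_(rev w * j) *)
fun deltaR :: "'n list \<Rightarrow> 'n \<Rightarrow> ('n \<Rightarrow> int)" where
  "deltaR [] i = unitvec i"
| "deltaR (j # w) i = (if i = j then deltaR w j else deltaR w i - deltaR w j)"

definition delta :: "'n list \<Rightarrow> 'n \<Rightarrow> ('n \<Rightarrow> int)" where
  "delta w i = deltaR (rev w) i"

fun BR :: "'n list \<Rightarrow> ('n \<Rightarrow> int) set" where
  "BR [] = {0}"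
| "BR (j # w) = {b + d | b d. b \<in> BR w \<and> d \<in> {0, deltaR w j}}"

definition B :: "'n list \<Rightarrow> ('n \<Rightarrow> int) set" where
  "B w = BR (rev w)"

lemma delta_simps:
  "delta [] i = unitvec i"
  "delta (w @ [j]) j = delta w j"
  "i \<noteq> j \<Longrightarrow> delta (w @ [j]) i = delta w i - delta w j"
  by (simp_all add: delta_def)

lemma B_simps:
  "B [] = {0}"
  "B (w @ [j]) = {b + d | b d. b \<in> B w \<and> d \<in> {0, delta w j}}"
  by (simp_all add: B_def delta_def)

definition unit_dist :: "('n::finite \<Rightarrow> int) \<Rightarrow> ('n \<Rightarrow> int) \<Rightarrow> bool" where
  "unit_dist x y \<longleftrightarrow> sqrt (real_of_int (\<Sum>k\<in>UNIV. (x k - y k)^2)) = 1"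

definition grid_connected :: "('n::finite \<Rightarrow> int) set \<Rightarrow> bool" where
  "grid_connected S \<longleftrightarrow>
     (\<forall>x\<in>S. \<forall>y\<in>S. (\<lambda>a b. a \<in> S \<and> b \<in> S \<and> unit_dist a b)\<^sup>*\<^sup>* x y)"

end

theory Submission
  imports Defs
begin

lemma unit_dist_sym: "unit_dist x y = unit_dist y x"
  unfolding unit_dist_def
  by (metis (no_types, lifting) minus_diff_eq power2_minus sum.cong)

lemma unit_dist_shift: "unit_dist (a + c) (b + c) = unit_dist a b"
  unfolding unit_dist_def by simp

lemma unit_dist_unitvec: "unit_dist (x + unitvec k) (x :: 'n::finite \<Rightarrow> int)"
proof -
  have "(\<Sum>t\<in>UNIV. ((x + unitvec k) t - x t)^2) = (\<Sum>t\<in>UNIV. (if t = k then 1 else 0::int))"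
    by (rule sum.cong) (auto simp: unitvec_def)
  also have "\<dots> = 1" by simp
  finally show ?thesis unfolding unit_dist_def by simp
qed

definition RS :: "('n::finite \<Rightarrow> int) set \<Rightarrow> _" where
  "RS S = (\<lambda>a b. a \<in> S \<and> b \<in> S \<and> unit_dist a b)"

lemma RS_mono: "(RS S)\<^sup>*\<^sup>* x y \<Longrightarrow> S \<subseteq> T \<Longrightarrow> (RS T)\<^sup>*\<^sup>* x y"
  by (induction rule: rtranclp_induct) (auto simp: RS_def intro: rtranclp.rtrancl_into_rtrancl)

lemma RS_shift: "(RS S)\<^sup>*\<^sup>* x y \<Longrightarrow> (RS ((\<lambda>b. b + c) ` S))\<^sup>*\<^sup>* (x + c) (y + c)"
proof (induction rule: rtranclp_induct)
  case base then show ?case by simp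
next
  case (step y z)
  then have "RS ((\<lambda>b. b + c) ` S) (y + c) (z + c)"
    by (auto simp: RS_def unit_dist_shift)
  with step.IH show ?case by (meson rtranclp.rtrancl_into_rtrancl)
qed

lemma BR_Cons: "BR (j # w) = BR w \<union> (\<lambda>b. b + deltaR w j) ` BR w"
  by (auto simp: image_def) (metis add.right_neutral)

lemma inv: "\<exists>b\<in>BR w. \<exists>b'\<in>BR w. b + deltaR w i = b' + unitvec i"
proof (induction w arbitrary: i)
  case Nil then show ?case by auto
next
  case (Cons j w)
  have sub: "BR w \<subseteq> BR (j # w)" unfolding BR_Cons by blast
  have sh: "\<And>b. b \<in> BR w \<Longrightarrow> b + deltaR w j \<in> BR (j # w)" unfolding BR_Cons by blast
  show ?case
  proof (cases "i = j")
    case True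
    from Cons[of j] obtain b b' where "b \<in> BR w" "b' \<in> BR w"
      "b + deltaR w j = b' + unitvec j" by blast
    with True sub show ?thesis by (metis deltaR.simps(2) subsetD)
  next
    case False
    from Cons[of i] obtain b b' where bb: "b \<in> BR w" "b' \<in> BR w"
      "b + deltaR w i = b' + unitvec i" by blast
    have "(b + deltaR w j) + deltaR (j # w) i = b' + unitvec i"
      using False bb(3) by (simp add: algebra_simps)
    with sh[OF bb(1)] sub bb(2) show ?thesis by blast
  qed
qed

lemma conn: "\<forall>x\<in>BR w. \<forall>y\<in>BR w. (RS (BR w))\<^sup>*\<^sup>* x y"
proof (induction w)
  case Nil then show ?case by simp
next
  case (Cons j w)
  define d where "d = deltaR w j"
  define S where "S = BR w"
  have eq: "BR (j # w) = S \<union> (\<lambda>b. b + d) ` S" unfolding S_def d_def by (rule BR_Cons)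
  have c1: "\<forall>x\<in>S. \<forall>y\<in>S. (RS (BR (j#w)))\<^sup>*\<^sup>* x y"
    using Cons eq unfolding S_def by (metis RS_mono Un_upper1)
  have c2: "\<forall>x\<in>S. \<forall>y\<in>S. (RS (BR (j#w)))\<^sup>*\<^sup>* (x + d) (y + d)"
    using Cons RS_shift eq unfolding S_def by (metis RS_mono Un_upper2)
  obtain b b' where bb: "b \<in> S" "b' \<in> S" "b + d = b' + unitvec j"
    using inv[of w j] unfolding S_def d_def by auto
  have m1: "b + d \<in> BR (j#w)" "b' \<in> BR (j#w)" using bb(1,2) unfolding eq by auto
  have e1: "RS (BR (j#w)) (b + d) b'" using m1 bb(3)
    by (simp add: RS_def unit_dist_unitvec)
  have e2: "RS (BR (j#w)) b' (b + d)" using m1 bb(3)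
    by (simp add: RS_def unit_dist_unitvec unit_dist_sym[of b'])
  show ?case
  proof (intro ballI)
    fix x y assume x: "x \<in> BR (j#w)" and y: "y \<in> BR (j#w)"
    show "(RS (BR (j#w)))\<^sup>*\<^sup>* x y"
    proof (cases "x \<in> S")
      case True
      show ?thesis
      proof (cases "y \<in> S")
        case True with c1 \<open>x \<in> S\<close> show ?thesis by blast
      next
        case False
        then obtain y0 where y0: "y0 \<in> S" "y = y0 + d" using y False unfolding eq by blast
        have "(RS (BR (j#w)))\<^sup>*\<^sup>* x b'" using c1 True bb by blast
        also have "(RS (BR (j#w)))\<^sup>*\<^sup>* b' (b + d)" using e2 by blast
        also have "(RS (BR (j#w)))\<^sup>*\<^sup>* (b + d) y" using c2 bb y0 by blast
        finally show ?thesis .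
      qed
    next
      case False
      then obtain x0 where x0: "x0 \<in> S" "x = x0 + d" using x False unfolding eq by blast
      show ?thesis
      proof (cases "y \<in> S")
        case True
        have "(RS (BR (j#w)))\<^sup>*\<^sup>* x (b + d)" using c2 bb x0 by blast
        also have "(RS (BR (j#w)))\<^sup>*\<^sup>* (b + d) b'" using e1 by blast
        also have "(RS (BR (j#w)))\<^sup>*\<^sup>* b' y" using c1 True bb by blast
        finally show ?thesis .
      next
        case False
        then obtain y0 where y0: "y0 \<in> S" "y = y0 + d" using y False unfolding eq by blast
        show ?thesis using c2 x0 y0 by blast
      qed
    qed
  qed
qed

theorem lemma3p5:
  fixes w :: "'n::finite list"
  shows "grid_connected (B w)"
  using conn[of "rev w"] unfolding grid_connected_def B_def RS_def by blast

end
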